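(* Let $\mathcal M=(M,\le,{}^\perp)$ be a complete orthomodular lattice, $L$ an involutive submonoid of $\mathbf{Lin}(\mathcal M)$ containing all Sasaki projections, and $\mathscr P(L)$ the corresponding involutive generalized dynamic algebra. Then $\widetilde{\mathscr P(L)}=(\{{\sim}W\mid W\in\mathscr P(L)\},\preceq,{\sim})$ is a complete orthomodular lattice closed under ${\sim}$, and the map $\delta\colon M\to\widetilde{\mathscr P(L)}$, $\delta(m)=\{\pi_m\}$, is an order-isomorphism with $\delta(m^\perp)={\sim}\delta(m)$ for all $m\in M$.
   Context: For an orthomodular lattice and $m\in M$, $\pi_m(x)=m\wedge(m^\perp\vee x)$ (Sasaki projection). A map $f\colon M\to M$ is linear if there is $g\colon M\to M$ (unique, written $f^*$) with $f(x)\le y^\perp\iff x\le g(y)^\perp$ for all $x,y$. $\mathbf{Lin}(\mathcal M)$ is the set of linear maps, an involutive monoid under composition, $f\mapsto f^*$, $\mathrm{id}_M$; each $\pi_m\in\mathbf{Lin}(\mathcal M)$. $\mathscr P(L)$ is the powerset of $L$ with union as join, $A\odot B=\{a\circ b\mid a\in A,b\in B\}$, $A^*=\{a^*\mid a\in A\}$, unit $\{\mathrm{id}_M\}$, ${\sim}A=\{\pi_{(\bigvee_{a\in A}a(1))^\perp}\}$. For a subset family $\mathcal W$ of the test set $\widetilde{\mathscr P(L)}=\{{\sim}W\}$, its join is $\bigvee\mathcal W={\sim}{\sim}(\bigcup\mathcal W)$, and $X\preceq Y$ iff $\bigvee\{X,Y\}=Y$. *)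

theory Defs
  imports "HOL-Library.Complemented_Lattices"
begin

text \<open>Orthomodular lattices are taken as the library class; the orthocomplement
  is \<open>uminus\<close>, the top element is \<open>top\<close>.\<close>

definition sasaki :: "'a::orthomodular_lattice \<Rightarrow> 'a \<Rightarrow> 'a" where
  "sasaki m x = inf m (sup (- m) x)"

definition is_linear :: "('a::orthomodular_lattice \<Rightarrow> 'a) \<Rightarrow> bool" where
  "is_linear f \<longleftrightarrow> (\<exists>g. \<forall>x y. f x \<le> - y \<longleftrightarrow> x \<le> - g y)"

definition adjoint :: "('a::orthomodular_lattice \<Rightarrow> 'a) \<Rightarrow> ('a \<Rightarrow> 'a)" where
  "adjoint f = (THE g. \<forall>x y. f x \<le> - y \<longleftrightarrow> x \<le> - g y)"

definition Lin :: "('a::orthomodular_lattice \<Rightarrow> 'a) set" where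
  "Lin = {f. is_linear f}"

definition inv_submonoid_sasaki :: "('a::orthomodular_lattice \<Rightarrow> 'a) set \<Rightarrow> bool" where
  "inv_submonoid_sasaki L \<longleftrightarrow> L \<subseteq> Lin \<and> id \<in> L \<and>
     (\<forall>f\<in>L. \<forall>g\<in>L. f \<circ> g \<in> L) \<and> (\<forall>f\<in>L. adjoint f \<in> L) \<and>
     (\<forall>m. sasaki m \<in> L)"

definition pneg :: "('a::complete_orthomodular_lattice \<Rightarrow> 'a) set \<Rightarrow> ('a \<Rightarrow> 'a) set" where
  "pneg A = {sasaki (- (SUP a\<in>A. a top))}"

definition tests :: "('a::complete_orthomodular_lattice \<Rightarrow> 'a) set \<Rightarrow> ('a \<Rightarrow> 'a) set set" where
  "tests L = {pneg W | W. W \<subseteq> L}"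

definition tjoin :: "('a::complete_orthomodular_lattice \<Rightarrow> 'a) set set \<Rightarrow> ('a \<Rightarrow> 'a) set" where
  "tjoin \<W> = pneg (pneg (\<Union>\<W>))"

definition tle :: "('a::complete_orthomodular_lattice \<Rightarrow> 'a) set \<Rightarrow> ('a \<Rightarrow> 'a) set \<Rightarrow> bool" where
  "tle X Y \<longleftrightarrow> tjoin {X, Y} = Y"

definition is_lub_on :: "'b set \<Rightarrow> ('b \<Rightarrow> 'b \<Rightarrow> bool) \<Rightarrow> 'b set \<Rightarrow> 'b \<Rightarrow> bool" where
  "is_lub_on T le S u \<longleftrightarrow> u \<in> T \<and> (\<forall>s\<in>S. le s u) \<and> (\<forall>v\<in>T. (\<forall>s\<in>S. le s v) \<longrightarrow> le u v)"

definition is_glb_on :: "'b set \<Rightarrow> ('b \<Rightarrow> 'b \<Rightarrow> bool) \<Rightarrow> 'b set \<Rightarrow> 'b \<Rightarrow> bool" where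
  "is_glb_on T le S u \<longleftrightarrow> u \<in> T \<and> (\<forall>s\<in>S. le u s) \<and> (\<forall>v\<in>T. (\<forall>s\<in>S. le v s) \<longrightarrow> le v u)"

definition sup_on :: "'b set \<Rightarrow> ('b \<Rightarrow> 'b \<Rightarrow> bool) \<Rightarrow> 'b \<Rightarrow> 'b \<Rightarrow> 'b" where
  "sup_on T le x y = (THE u. is_lub_on T le {x, y} u)"

definition inf_on :: "'b set \<Rightarrow> ('b \<Rightarrow> 'b \<Rightarrow> bool) \<Rightarrow> 'b \<Rightarrow> 'b \<Rightarrow> 'b" where
  "inf_on T le x y = (THE u. is_glb_on T le {x, y} u)"

definition top_on :: "'b set \<Rightarrow> ('b \<Rightarrow> 'b \<Rightarrow> bool) \<Rightarrow> 'b" where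
  "top_on T le = (THE u. is_lub_on T le T u)"

definition bot_on :: "'b set \<Rightarrow> ('b \<Rightarrow> 'b \<Rightarrow> bool) \<Rightarrow> 'b" where
  "bot_on T le = (THE u. is_glb_on T le T u)"

definition complete_oml_on :: "'b set \<Rightarrow> ('b \<Rightarrow> 'b \<Rightarrow> bool) \<Rightarrow> ('b \<Rightarrow> 'b) \<Rightarrow> bool" where
  "complete_oml_on T le c \<longleftrightarrow>
     (\<forall>x\<in>T. le x x) \<and>
     (\<forall>x\<in>T. \<forall>y\<in>T. le x y \<and> le y x \<longrightarrow> x = y) \<and>
     (\<forall>x\<in>T. \<forall>y\<in>T. \<forall>z\<in>T. le x y \<and> le y z \<longrightarrow> le x z) \<and>
     (\<forall>S\<subseteq>T. \<exists>u. is_lub_on T le S u) \<and>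
     (\<forall>S\<subseteq>T. \<exists>u. is_glb_on T le S u) \<and>
     (\<forall>x\<in>T. c x \<in> T) \<and>
     (\<forall>x\<in>T. c (c x) = x) \<and>
     (\<forall>x\<in>T. \<forall>y\<in>T. le x y \<longrightarrow> le (c y) (c x)) \<and>
     (\<forall>x\<in>T. inf_on T le x (c x) = bot_on T le) \<and>
     (\<forall>x\<in>T. sup_on T le x (c x) = top_on T le) \<and>
     (\<forall>x\<in>T. \<forall>y\<in>T. le x y \<longrightarrow> y = sup_on T le x (inf_on T le y (c x)))"

end

theory Submission
  imports Defs
begin

lemma transport_oml:
  fixes \<phi> :: "'a::complete_orthomodular_lattice \<Rightarrow> 'b"
  assumes inj: "inj \<phi>" and T: "T = range \<phi>"
    and le: "\<And>x y. le (\<phi> x) (\<phi> y) \<longleftrightarrow> x \<le> y"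
    and c: "\<And>x. c (\<phi> x) = \<phi> (- x)"
  shows "complete_oml_on T le c"
proof -
  have lub: "is_lub_on T le (\<phi> ` A) (\<phi> (Sup A))" for A
    unfolding is_lub_on_def T using le by (auto intro: Sup_upper Sup_least)
  have glb: "is_glb_on T le (\<phi> ` A) (\<phi> (Inf A))" for A
    unfolding is_glb_on_def T using le by (auto intro: Inf_lower Inf_greatest)
  have antis: "\<forall>x\<in>T. \<forall>y\<in>T. le x y \<and> le y x \<longrightarrow> x = y"
    unfolding T using le by (auto intro: antisym)
  have lubu: "u = v" if "is_lub_on T le S u" "is_lub_on T le S v" for S u v
    using that antis unfolding is_lub_on_def by blast
  have glbu: "u = v" if "is_glb_on T le S u" "is_glb_on T le S v" for S u v
    using that antis unfolding is_glb_on_def by blast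
  have supT: "sup_on T le (\<phi> x) (\<phi> y) = \<phi> (sup x y)" for x y
  proof -
    have "is_lub_on T le {\<phi> x, \<phi> y} (\<phi> (Sup {x,y}))" using lub[of "{x,y}"] by simp
    then show ?thesis unfolding sup_on_def using lubu by (auto intro: the_equality)
  qed
  have infT: "inf_on T le (\<phi> x) (\<phi> y) = \<phi> (inf x y)" for x y
  proof -
    have "is_glb_on T le {\<phi> x, \<phi> y} (\<phi> (Inf {x,y}))" using glb[of "{x,y}"] by simp
    then show ?thesis unfolding inf_on_def using glbu by (auto intro: the_equality)
  qed
  have topT: "top_on T le = \<phi> top"
  proof -
    have "is_lub_on T le T (\<phi> (Sup UNIV))" using lub[of UNIV] T by simp
    then show ?thesis unfolding top_on_def using lubu by (auto intro: the_equality)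
  qed
  have botT: "bot_on T le = \<phi> bot"
  proof -
    have "is_glb_on T le T (\<phi> (Inf UNIV))" using glb[of UNIV] T by simp
    then show ?thesis unfolding bot_on_def using glbu by (auto intro: the_equality)
  qed
  have subs: "S \<subseteq> T \<Longrightarrow> \<exists>A. S = \<phi> ` A" for S
    unfolding T by (metis subset_image_iff)
  show ?thesis
    unfolding complete_oml_on_def
  proof (intro conjI)
    show "\<forall>S\<subseteq>T. \<exists>u. is_lub_on T le S u" using subs lub by metis
    show "\<forall>S\<subseteq>T. \<exists>u. is_glb_on T le S u" using subs glb by metis
    show "\<forall>x\<in>T. \<forall>y\<in>T. le x y \<longrightarrow> y = sup_on T le x (inf_on T le y (c x))"
    proof (intro ballI impI)
      fix x y assume "x \<in> T" "y \<in> T" "le x y"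
      then obtain a b where ab: "x = \<phi> a" "y = \<phi> b" unfolding T by auto
      with \<open>le x y\<close> have "a \<le> b" using le by simp
      then have "b = sup a (inf b (- a))" using orthomodular[of a b] by (simp add: inf_commute)
      then show "y = sup_on T le x (inf_on T le y (c x))"
        using ab c supT infT by metis
    qed
    show "\<forall>x\<in>T. inf_on T le x (c x) = bot_on T le"
      using infT c botT unfolding T[symmetric] by (auto simp: T)
    show "\<forall>x\<in>T. sup_on T le x (c x) = top_on T le"
      using supT c topT by (auto simp: T)
  qed (use antis in \<open>auto simp: T le c supT infT topT botT\<close>)
qed

lemma sasaki_top: "sasaki m top = m"
  by (simp add: sasaki_def)

theorem proposition3p10:
  fixes L :: "('a::complete_orthomodular_lattice \<Rightarrow> 'a) set"
  assumes "inv_submonoid_sasaki L"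
  shows "complete_oml_on (tests L) tle pneg
     \<and> (\<forall>X\<in>tests L. pneg X \<in> tests L)
     \<and> bij_betw (\<lambda>m. {sasaki m}) UNIV (tests L)
     \<and> (\<forall>m n :: 'a. m \<le> n \<longleftrightarrow> tle {sasaki m} {sasaki n})
     \<and> (\<forall>m :: 'a. {sasaki (- m)} = pneg {sasaki m})"
proof -
  have sL: "sasaki m \<in> L" for m using assms unfolding inv_submonoid_sasaki_def by blast
  have pn: "pneg {sasaki m} = {sasaki (- m)}" for m :: 'a
    by (simp add: pneg_def sasaki_top)
  have inj: "inj (\<lambda>m::'a. {sasaki m})"
    by (rule injI) (metis sasaki_top singleton_inject)
  have T: "tests L = range (\<lambda>m::'a. {sasaki m})"
  proof
    show "tests L \<subseteq> range (\<lambda>m::'a. {sasaki m})"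
      unfolding tests_def pneg_def by auto
    show "range (\<lambda>m::'a. {sasaki m}) \<subseteq> tests L"
    proof
      fix X assume "X \<in> range (\<lambda>m::'a. {sasaki m})"
      then obtain m where X: "X = {sasaki m}" by auto
      have "X = pneg {sasaki (- m)}" using X pn[of "- m"] by simp
      moreover have "{sasaki (- m)} \<subseteq> L" using sL by auto
      ultimately show "X \<in> tests L" unfolding tests_def by blast
    qed
  qed
  have le: "tle {sasaki m} {sasaki n} \<longleftrightarrow> m \<le> n" for m n :: 'a
  proof -
    have "tjoin {{sasaki m}, {sasaki n}} = {sasaki (sup m n)}"
      by (simp add: tjoin_def pneg_def sasaki_top sup_commute)
    then have "tle {sasaki m} {sasaki n} \<longleftrightarrow> sasaki (sup m n) = sasaki n"
      by (simp add: tle_def)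
    also have "\<dots> \<longleftrightarrow> sup m n = n" by (metis sasaki_top)
    also have "\<dots> \<longleftrightarrow> m \<le> n" by (simp add: le_iff_sup)
    finally show ?thesis .
  qed
  have oml: "complete_oml_on (tests L) tle pneg"
    by (rule transport_oml[OF inj T]) (simp_all add: le pn)
  show ?thesis
    using oml inj T le pn by (auto simp: bij_betw_def)
qed

end
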